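(* There exists a nonempty tree-shift of finite type containing no periodic tree. For example, take $\mathcal{A}=\{0,1\}$, $A_0=\begin{pmatrix}0&1\\1&0\end{pmatrix}$ and $A_1=\begin{pmatrix}1&0\\0&1\end{pmatrix}$. Then $\mathsf{X}_{A_0,A_1}$ is nonempty and contains no periodic tree.
   Context: $\Sigma=\{0,1\}$ and $\Sigma^*$ is the set of finite words, with $\epsilon$ the empty word. A tree is a map $t:\Sigma^*\to\mathcal{A}$, and we write $t_x=t(x)$. For a word $w$, the shift $\sigma_w$ is defined by $(\sigma_w t)_x=t_{wx}$. A pattern is a map defined on a finite prefix-closed subset of $\Sigma^*$. $\mathsf{X}_{\mathcal{F}}$ is the set of trees in which no pattern of $\mathcal{F}$ occurs at any node. A tree-shift of finite type is $\mathsf{X}_{\mathcal{F}}$ with $\mathcal{F}$ finite. The vertex tree-shift is $\mathsf{X}_{A_0,A_1}=\{t: A_0(t_x,t_{x0})=1,\ A_1(t_x,t_{x1})=1\ \forall x\in\Sigma^*\}$; it is a tree-shift of finite type. A complete prefix code (CPC) is a finite set $P\subseteq\Sigma^*\setminus\{\epsilon\}$ such that no word of $P$ is a prefix of another word of $P$, and every $x\in\Sigma^*$ with $|x|\ge\max_{y\in P}|y|$ has a prefix in $P$. A tree $t\in X$ is periodic if there is a CPC $P$ with $\sigma_x t=t$ for all $x\in P$. *)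

theory Defs
  imports Main "HOL-Library.Sublist"
begin

text \<open>Sigma = {0,1} is encoded as bool (False = 0, True = 1); words in Sigma* are bool lists,
  concatenation w x is w @ x, and the empty word is []. A tree over alphabet 'a is a map
  bool list => 'a.\<close>

type_synonym word = "bool list"
type_synonym 'a tree = "word \<Rightarrow> 'a"

definition shift :: "word \<Rightarrow> 'a tree \<Rightarrow> 'a tree" where
  "shift w t = (\<lambda>x. t (w @ x))"

definition is_pattern :: "(word \<Rightarrow> 'a option) \<Rightarrow> bool" where
  "is_pattern p \<longleftrightarrow> finite (dom p) \<and> (\<forall>x\<in>dom p. \<forall>y. prefix y x \<longrightarrow> y \<in> dom p)"

definition occurs_at :: "(word \<Rightarrow> 'a option) \<Rightarrow> 'a tree \<Rightarrow> word \<Rightarrow> bool" where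
  "occurs_at p t x \<longleftrightarrow> (\<forall>y\<in>dom p. p y = Some (t (x @ y)))"

definition XF :: "(word \<Rightarrow> 'a option) set \<Rightarrow> 'a tree set" where
  "XF F = {t. \<forall>p\<in>F. \<forall>x. \<not> occurs_at p t x}"

definition tree_shift_finite_type :: "'a tree set \<Rightarrow> bool" where
  "tree_shift_finite_type X \<longleftrightarrow>
     (\<exists>F. finite F \<and> (\<forall>p\<in>F. is_pattern p) \<and> X = XF F)"

definition vertex_shift :: "('a \<Rightarrow> 'a \<Rightarrow> nat) \<Rightarrow> ('a \<Rightarrow> 'a \<Rightarrow> nat) \<Rightarrow> 'a tree set" where
  "vertex_shift A0 A1 = {t. \<forall>x. A0 (t x) (t (x @ [False])) = 1 \<and> A1 (t x) (t (x @ [True])) = 1}"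

text \<open>Complete prefix code. The condition "every x with |x| >= max_{y in P} |y| has a prefix
  in P" is written without Max (so the empty set is automatically not a CPC).\<close>
definition cpc :: "word set \<Rightarrow> bool" where
  "cpc P \<longleftrightarrow> finite P \<and> [] \<notin> P
     \<and> (\<forall>x\<in>P. \<forall>y\<in>P. prefix x y \<longrightarrow> x = y)
     \<and> (\<forall>x. (\<forall>y\<in>P. length y \<le> length x) \<longrightarrow> (\<exists>y\<in>P. prefix y x))"

definition periodic :: "'a tree \<Rightarrow> bool" where
  "periodic t \<longleftrightarrow> (\<exists>P. cpc P \<and> (\<forall>x\<in>P. shift x t = t))"

definition exA0 :: "bool \<Rightarrow> bool \<Rightarrow> nat" where
  "exA0 a b = (if a \<noteq> b then 1 else 0)"

definition exA1 :: "bool \<Rightarrow> bool \<Rightarrow> nat" where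
  "exA1 a b = (if a = b then 1 else 0)"

end

theory Submission
  imports Defs
begin

lemma vs_A0:
  assumes "t \<in> vertex_shift exA0 exA1"
  shows "exA0 (t x) (t (x @ [False])) = 1" "exA1 (t x) (t (x @ [True])) = 1"
  using assms unfolding vertex_shift_def by blast+

lemma exA0_1: "exA0 a b = 1 \<Longrightarrow> b = (\<not> a)"
  unfolding exA0_def by (cases a; cases b; simp)

lemma exA1_1: "exA1 a b = 1 \<Longrightarrow> b = a"
  unfolding exA1_def by (cases a; cases b; simp)

lemma vs_rules:
  assumes "t \<in> vertex_shift exA0 exA1"
  shows "t (x @ [False]) = (\<not> t x)" "t (x @ [True]) = t x"
  using exA0_1[OF vs_A0(1)[OF assms]] exA1_1[OF vs_A0(2)[OF assms]] by blast+

lemma vs_path: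
  assumes "t \<in> vertex_shift exA0 exA1"
  shows "t (False # replicate n True) = (\<not> t [])"
proof (induction n)
  case 0
  then show ?case using vs_rules(1)[OF assms, of "[]"] by simp
next
  case (Suc n)
  have "False # replicate (Suc n) True = (False # replicate n True) @ [True]"
    by (simp add: replicate_append_same)
  then show ?case using vs_rules(2)[OF assms, of "False # replicate n True"] Suc by simp
qed

lemma not_periodic:
  assumes "t \<in> vertex_shift exA0 exA1"
  shows "\<not> periodic t"
proof
  assume "periodic t"
  then obtain P where P: "cpc P" and sh: "\<forall>x\<in>P. shift x t = t"
    unfolding periodic_def by blast
  have fin: "finite P" and ne: "[] \<notin> P"
    and cov: "\<forall>x. (\<forall>y\<in>P. length y \<le> length x) \<longrightarrow> (\<exists>y\<in>P. prefix y x)"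
    using P unfolding cpc_def by auto
  define N where "N = (\<Sum>y\<in>P. length y)"
  have "\<forall>y\<in>P. length y \<le> length (False # replicate N True)"
    using fin by (auto simp: N_def intro: le_SucI member_le_sum)
  then obtain y where y: "y \<in> P" "prefix y (False # replicate N True)"
    using cov by blast
  have "y \<noteq> []" using y ne by auto
  then obtain k where yk: "y = False # replicate k True"
  proof -
    from y(2) have "y = take (length y) (False # replicate N True)"
      by (auto simp: prefix_def)
    moreover obtain m where "length y = Suc m" using \<open>y \<noteq> []\<close> by (cases y) auto
    ultimately have "y = False # replicate (min m N) True" by simp
    then show ?thesis using that by blast
  qed
  have "t y = t []" using sh y(1) unfolding shift_def by (metis append.right_neutral)
  then show False using vs_path[OF assms, of k] yk by simp
qed

definition pat :: "bool \<Rightarrow> bool \<Rightarrow> bool \<Rightarrow> (word \<Rightarrow> bool option)" where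
  "pat a c b = [[] \<mapsto> a, [c] \<mapsto> b]"

definition FF :: "(word \<Rightarrow> bool option) set" where
  "FF = {pat False False False, pat True False True, pat False True True, pat True True False}"

lemma FF_fin: "finite FF"
  unfolding FF_def by (rule finite.insertI)+ (rule finite.emptyI)

lemma FF_pat: "p \<in> FF \<Longrightarrow> is_pattern p"
  unfolding FF_def is_pattern_def pat_def
  by (auto simp: prefix_Cons split: if_splits)

lemma occ: "occurs_at (pat a c b) t x \<longleftrightarrow> t x = a \<and> t (x @ [c]) = b"
  unfolding occurs_at_def pat_def by auto

lemma pt1: "(\<forall>p\<in>FF. \<not> occurs_at p t x) \<longleftrightarrow> (t (x @ [False]) = (\<not> t x) \<and> t (x @ [True]) = t x)"
proof -
  have "(\<forall>p\<in>FF. \<not> occurs_at p t x) \<longleftrightarrow>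
    \<not> (t x = False \<and> t (x @ [False]) = False) \<and> \<not> (t x = True \<and> t (x @ [False]) = True) \<and>
    \<not> (t x = False \<and> t (x @ [True]) = True) \<and> \<not> (t x = True \<and> t (x @ [True]) = False)"
    unfolding FF_def ball_simps occ by simp
  also have "\<dots> \<longleftrightarrow> (t (x @ [False]) = (\<not> t x) \<and> t (x @ [True]) = t x)"
    by (cases "t x"; cases "t (x @ [False])"; cases "t (x @ [True])"; simp)
  finally show ?thesis .
qed

lemma pt2: "(exA0 (t x) (t (x @ [False])) = 1 \<and> exA1 (t x) (t (x @ [True])) = 1) \<longleftrightarrow> (t (x @ [False]) = (\<not> t x) \<and> t (x @ [True]) = t x)"
  unfolding exA0_def exA1_def
  by (cases "t x"; cases "t (x @ [False])"; cases "t (x @ [True])"; simp)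

lemma XF_eq: "XF FF = vertex_shift exA0 exA1"
proof (rule set_eqI)
  fix t :: "bool tree"
  have "t \<in> XF FF \<longleftrightarrow> (\<forall>x. \<forall>p\<in>FF. \<not> occurs_at p t x)"
    unfolding XF_def by blast
  also have "\<dots> \<longleftrightarrow> (\<forall>x. exA0 (t x) (t (x @ [False])) = 1 \<and> exA1 (t x) (t (x @ [True])) = 1)"
    by (simp only: pt1 pt2)
  also have "\<dots> \<longleftrightarrow> t \<in> vertex_shift exA0 exA1"
    unfolding vertex_shift_def by simp
  finally show "t \<in> XF FF \<longleftrightarrow> t \<in> vertex_shift exA0 exA1" .
qed

theorem theorem3p3:
  shows "(\<exists>X :: bool tree set. tree_shift_finite_type X \<and> X \<noteq> {} \<and> (\<forall>t\<in>X. \<not> periodic t))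
    \<and> vertex_shift exA0 exA1 \<noteq> {} \<and> (\<forall>t\<in>vertex_shift exA0 exA1. \<not> periodic t)"
proof -
  define t0 :: "bool tree" where "t0 = (\<lambda>x. odd (length (filter Not x)))"
  have "t0 \<in> vertex_shift exA0 exA1"
    unfolding vertex_shift_def exA0_def exA1_def t0_def by simp
  hence ne: "vertex_shift exA0 exA1 \<noteq> {}" by blast
  have "tree_shift_finite_type (vertex_shift exA0 exA1)"
    unfolding tree_shift_finite_type_def using FF_fin FF_pat XF_eq[symmetric] by blast
  then show ?thesis using ne not_periodic by blast
qed

end
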